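(* Let $\sum_{n=1}^{\infty}x_n$ be a divergent series of positive real terms with $\lim_{n\to\infty}x_n=0$. Then for every $x\geq 0$ there exists a permutation $\sigma$ of $\mathbb{N}$ such that the series $\sum_{n=1}^{\infty}(x_n-x_{\sigma(n)})$ converges and $\sum_{n=1}^{\infty}(x_n-x_{\sigma(n)})=x$.
   Context: $S_\infty$ denotes the set of all permutations (bijections) of $\mathbb{N}$. *)

theory Defs
  imports "HOL-Analysis.Analysis"
begin

end

theory Submission
  imports Defs
begin

locale cons =
  fixes x :: "nat \<Rightarrow> real" and c :: real
  assumes pos: "\<And>n. x n > 0" and div: "\<not> summable x" and lim: "x \<longlonglongrightarrow> 0"
    and cpos: "c > 0"
begin

fun st :: "nat \<Rightarrow> nat list \<times> nat" where
  "st 0 = ([], 0)"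
| "st (Suc N) = (if sum_list (map x (fst (st N))) < c then (fst (st N) @ [N], snd (st N))
     else if fst (st N) \<noteq> [] \<and> x N \<le> (1/2)^(snd (st N)) then (tl (fst (st N)), Suc (snd (st N)))
     else st N)"

definition q where "q N = fst (st N)"
definition b where "b N = snd (st N)"
definition s where "s N = sum_list (map x (q N))"
definition isV where "isV N \<longleftrightarrow> \<not> s N < c \<and> q N \<noteq> [] \<and> x N \<le> (1/2)^(b N)"

lemma q0[simp]: "q 0 = []" and b0[simp]: "b 0 = 0"
  by (simp_all add: q_def b_def)

lemma q_Suc: "q (Suc N) = (if s N < c then q N @ [N] else if isV N then tl (q N) else q N)"
  by (simp add: q_def s_def isV_def b_def)

lemma b_Suc: "b (Suc N) = (if isV N then Suc (b N) else b N)"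
  by (auto simp add: q_def s_def isV_def b_def)

lemma UV: "isV N \<Longrightarrow> \<not> s N < c"
  by (simp add: isV_def)

lemma inv1: "sorted_wrt (<) (q N) \<and> (\<forall>e\<in>set (q N). e < N)"
proof (induction N)
  case 0 then show ?case by simp
next
  case (Suc N)
  then show ?case
    by (cases "q N") (auto simp: q_Suc sorted_wrt_append)
qed

lemma set_q_Suc: "set (q (Suc N)) \<subseteq> set (q N) \<union> {N}"
  by (cases "q N") (auto simp: q_Suc)

lemma inv2: "e \<in> set (q N) \<Longrightarrow> s e < c"
proof (induction N)
  case 0 then show ?case by simp
next
  case (Suc N)
  then show ?case using set_q_Suc[of N] by (cases "q N") (auto simp: q_Suc split: if_splits)
qed

lemma inv3: "b N \<le> N \<and> (\<forall>e\<in>set (q N). b N \<le> e)"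
proof (induction N)
  case 0 then show ?case by simp
next
  case (Suc N)
  have so: "sorted_wrt (<) (q N)" using inv1 by blast
  show ?case
  proof (cases "s N < c")
    case True
    then show ?thesis using Suc UV by (auto simp: q_Suc b_Suc)
  next
    case F: False
    show ?thesis
    proof (cases "isV N")
      case True
      then obtain h r where qN: "q N = h # r" by (cases "q N") (auto simp: isV_def)
      then show ?thesis using Suc so F True by (fastforce simp: q_Suc b_Suc)
    next
      case False
      then show ?thesis using Suc F by (auto simp: q_Suc b_Suc)
    qed
  qed
qed

lemma hd_in: "isV m \<Longrightarrow> hd (q m) \<in> set (q m)"
  by (auto simp: isV_def)

lemma inv4: "m < N \<Longrightarrow> isV m \<Longrightarrow> e \<in> set (q N) \<Longrightarrow> hd (q m) < e"
proof (induction N arbitrary: e)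
  case 0 then show ?case by simp
next
  case (Suc N)
  have so: "sorted_wrt (<) (q N)" using inv1 by blast
  have hm: "hd (q m) < m" using inv1[of m] hd_in[OF Suc.prems(2)] by blast
  show ?case
  proof (cases "m = N")
    case True
    then obtain h r where qN: "q N = h # r" using Suc.prems by (cases "q N") (auto simp: isV_def)
    show ?thesis using Suc.prems True so qN UV[of N] by (auto simp: q_Suc)
  next
    case False
    then have "m < N" using Suc.prems by simp
    then show ?thesis using Suc set_q_Suc[of N] hm by auto
  qed
qed

lemma inv5: "s N < c \<or> (q N \<noteq> [] \<and> s N < c + x (last (q N)))"
proof (induction N)
  case 0 then show ?case using cpos by (simp add: s_def)
next
  case (Suc N)
  show ?case
  proof (cases "s N < c")
    case True
    then show ?thesis by (simp add: q_Suc s_def)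
  next
    case F: False
    show ?thesis
    proof (cases "isV N")
      case True
      then obtain h r where qN: "q N = h # r" by (cases "q N") (auto simp: isV_def)
      have "s (Suc N) = s N - x h" using qN F True by (simp add: q_Suc s_def)
      moreover have "x h > 0" by (rule pos)
      moreover have "r \<noteq> [] \<Longrightarrow> last r = last (q N)" using qN by simp
      moreover have "r = [] \<Longrightarrow> s (Suc N) = 0" using qN F True by (simp add: q_Suc s_def)
      ultimately show ?thesis using Suc F cpos qN True by (cases "r = []") (auto simp: q_Suc)
    next
      case False
      then show ?thesis using Suc F by (simp add: q_Suc s_def)
    qed
  qed
qed

definition \<sigma> where "\<sigma> N = (if isV N then hd (q N) else if (\<exists>m. isV m \<and> hd (q m) = N)
   then (THE m. isV m \<and> hd (q m) = N) else N)"

lemma hd_inj: "isV m \<Longrightarrow> isV m' \<Longrightarrow> hd (q m) = hd (q m') \<Longrightarrow> m = m'"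
  using inv4[of m m' "hd (q m')"] inv4[of m' m "hd (q m)"] hd_in
  by (metis less_irrefl linorder_neqE_nat)

lemma hdV_notV: "isV m \<Longrightarrow> \<not> isV (hd (q m))"
  using hd_in inv2 UV by blast

lemma \<sigma>\<sigma>: "\<sigma> (\<sigma> N) = N"
proof (cases "isV N")
  case True
  have ex: "\<exists>m. isV m \<and> hd (q m) = hd (q N)" using True by blast
  have "(THE m. isV m \<and> hd (q m) = hd (q N)) = N"
    by (rule the_equality) (use True hd_inj in auto)
  then show ?thesis using True hdV_notV[OF True] ex by (simp add: \<sigma>_def)
next
  case False
  show ?thesis
  proof (cases "\<exists>m. isV m \<and> hd (q m) = N")
    case True
    define m0 where "m0 = (THE m. isV m \<and> hd (q m) = N)"
    have "isV m0 \<and> hd (q m0) = N" unfolding m0_def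
      by (rule theI') (use True hd_inj in blast)
    then show ?thesis using False True by (simp add: \<sigma>_def m0_def[symmetric])
  next
    case F2: False
    have e: "\<sigma> N = N" using False F2 by (auto simp: \<sigma>_def)
    show ?thesis by (simp add: e)
  qed
qed

lemma bij_\<sigma>: "bij \<sigma>"
  by (rule o_bij[where g=\<sigma>]) (auto simp: \<sigma>\<sigma> fun_eq_iff)

lemma S_eq: "(\<Sum>i<N. x i - x (\<sigma> i)) = sum_list (map (\<lambda>e. x e - x (\<sigma> e)) (q N))"
proof (induction N)
  case 0 then show ?case by simp
next
  case (Suc N)
  show ?case
  proof (cases "s N < c")
    case True
    then show ?thesis using Suc by (simp add: q_Suc)
  next
    case F: False
    show ?thesis
    proof (cases "isV N")
      case True
      then obtain h r where qN: "q N = h # r" by (cases "q N") (auto simp: isV_def)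
      have sN: "\<sigma> N = h" using True qN by (simp add: \<sigma>_def)
      have sh: "\<sigma> h = N" using \<sigma>\<sigma>[of N] sN by simp
      show ?thesis using Suc qN F True sN sh by (simp add: q_Suc)
    next
      case False
      have "\<not> (\<exists>m. isV m \<and> hd (q m) = N)" using F hd_in inv2 by blast
      then have "\<sigma> N = N" using False by (auto simp: \<sigma>_def)
      then show ?thesis using Suc F False by (simp add: q_Suc)
    qed
  qed
qed

lemma b_mono: "N \<le> M \<Longrightarrow> b N \<le> b M"
proof (induction M rule: dec_induct)
  case base then show ?case by simp
next
  case (step M) then show ?case by (simp add: b_Suc)
qed

lemma b_strict: "m < m' \<Longrightarrow> isV m \<Longrightarrow> b m < b m'"
  using b_mono[of "Suc m" m'] by (simp add: b_Suc)

lemma exV: "\<exists>m\<ge>N. isV m"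
proof (rule ccontr)
  assume "\<not> (\<exists>m\<ge>N. isV m)"
  then have nV: "\<And>m. N \<le> m \<Longrightarrow> \<not> isV m" by blast
  have bc: "b k = b N" if "N \<le> k" for k using that
  proof (induction k rule: dec_induct)
    case base then show ?case by simp
  next
    case (step k) then show ?case using nV by (simp add: b_Suc)
  qed
  show False
  proof (cases "\<forall>M\<ge>N. s M < c")
    case True
    have sM: "s M = s N + (\<Sum>i\<in>{N..<M}. x i)" if "N \<le> M" for M using that
    proof (induction M rule: dec_induct)
      case base then show ?case by simp
    next
      case (step M)
      have "s M < c" using True step by auto
      then show ?case using step by (simp add: q_Suc s_def)
    qed
    have nonneg: "\<And>n. 0 \<le> x n" using pos less_imp_le by blast
    obtain n where n: "(\<Sum>i<n. x i) > \<bar>c - s N\<bar> + (\<Sum>i<N. x i)"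
      using summableI_nonneg_bounded[of x "\<bar>c - s N\<bar> + (\<Sum>i<N. x i)", OF nonneg] div
      by (meson not_le)
    have "N \<le> n"
    proof (rule ccontr)
      assume "\<not> N \<le> n"
      then have "(\<Sum>i<n. x i) \<le> (\<Sum>i<N. x i)"
        by (intro sum_mono2) (auto simp: nonneg)
      then show False using n by linarith
    qed
    have "(\<Sum>i<n. x i) = (\<Sum>i<N. x i) + (\<Sum>i\<in>{N..<n}. x i)"
      using \<open>N \<le> n\<close> by (metis sum.atLeastLessThan_concat zero_le lessThan_atLeast0)
    then have "s n > c" using sM[OF \<open>N \<le> n\<close>] n by linarith
    then show False using True \<open>N \<le> n\<close> by auto
  next
    case False
    then obtain M where M: "N \<le> M" "\<not> s M < c" by blast
    have qc: "q k = q M" if "M \<le> k" for k using that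
    proof (induction k rule: dec_induct)
      case base then show ?case by simp
    next
      case (step k)
      have "s k = s M" using step by (simp add: s_def)
      then show ?case using step M nV[of k] by (simp add: q_Suc)
    qed
    have "eventually (\<lambda>n. x n < (1/2)^(b N)) sequentially"
      using order_tendstoD(2)[OF lim] by simp
    then obtain K where K: "\<And>n. n \<ge> K \<Longrightarrow> x n < (1/2)^(b N)"
      unfolding eventually_sequentially by blast
    define k where "k = max K M"
    have "q M \<noteq> []" using M(2) cpos by (auto simp: s_def)
    then have "isV k" using qc[of k] K[of k] bc[of k] M
      unfolding isV_def k_def s_def by auto
    then show False using nV[of k] M unfolding k_def by auto
  qed
qed

lemma popped: "p < length (q N) \<Longrightarrow> \<exists>m\<ge>N. isV m \<and> hd (q m) = q N ! p"
proof (induction p arbitrary: N)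
  case 0
  define m where "m = (LEAST m. N \<le> m \<and> isV m)"
  have m: "N \<le> m \<and> isV m" unfolding m_def by (rule LeastI_ex) (use exV in blast)
  have nb: "\<And>k. N \<le> k \<Longrightarrow> k < m \<Longrightarrow> \<not> isV k" unfolding m_def
    using not_less_Least by blast
  have pre: "\<exists>ys. q k = q N @ ys" if "N \<le> k" "k \<le> m" for k using that
  proof (induction k rule: dec_induct)
    case base then show ?case by simp
  next
    case (step k)
    then obtain ys where "q k = q N @ ys" by auto
    then show ?case using step nb[of k] by (auto simp: q_Suc)
  qed
  obtain ys where ys: "q m = q N @ ys" using pre[of m] m by auto
  then have "hd (q m) = q N ! 0" using 0 by (cases "q N") auto
  then show ?case using m by blast
next
  case (Suc p)
  define m where "m = (LEAST m. N \<le> m \<and> isV m)"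
  have m: "N \<le> m \<and> isV m" unfolding m_def by (rule LeastI_ex) (use exV in blast)
  have nb: "\<And>k. N \<le> k \<Longrightarrow> k < m \<Longrightarrow> \<not> isV k" unfolding m_def
    using not_less_Least by blast
  have pre: "\<exists>ys. q k = q N @ ys" if "N \<le> k" "k \<le> m" for k using that
  proof (induction k rule: dec_induct)
    case base then show ?case by simp
  next
    case (step k)
    then obtain ys where "q k = q N @ ys" by auto
    then show ?case using step nb[of k] by (auto simp: q_Suc)
  qed
  obtain ys where ys: "q m = q N @ ys" using pre[of m] m by auto
  have qS: "q (Suc m) = tl (q m)" using m UV[of m] by (simp add: q_Suc)
  have l: "p < length (q (Suc m))" using qS ys Suc.prems by simp
  have e: "q (Suc m) ! p = q N ! Suc p" using qS ys Suc.prems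
    by (simp add: nth_tl nth_append)
  from Suc.IH[OF l] e m show ?case by (metis Suc_leD le_trans)
qed

lemma \<sigma>_q: assumes "e \<in> set (q N)" shows "isV (\<sigma> e) \<and> N \<le> \<sigma> e \<and> hd (q (\<sigma> e)) = e"
proof -
  obtain p where p: "p < length (q N)" "q N ! p = e" using assms by (meson in_set_conv_nth)
  obtain m where m: "m \<ge> N" "isV m" "hd (q m) = e" using popped[OF p(1)] p(2) by blast
  have ne: "\<not> isV e" using assms inv2 UV by blast
  have "(THE m. isV m \<and> hd (q m) = e) = m"
    by (rule the_equality) (use m hd_inj in auto)
  then have "\<sigma> e = m" using ne m by (auto simp: \<sigma>_def)
  then show ?thesis using m by simp
qed

lemma geom: "a \<le> k \<Longrightarrow> (\<Sum>j\<in>{a..<k}. (1/2::real)^j) = 2*(1/2)^a - 2*(1/2)^k"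
proof (induction k rule: dec_induct)
  case base then show ?case by simp
next
  case (step k) then show ?case by (simp add: sum.atLeastLessThan_Suc)
qed

lemma geom2: assumes "finite F" "F \<subseteq> {a..}" shows "(\<Sum>j\<in>F. (1/2::real)^j) \<le> 2*(1/2)^a"
proof -
  obtain k where k: "F \<subseteq> {..<k}" using finite_nat_bounded[OF assms(1)] by blast
  have F: "F \<subseteq> {a..<max a k}" using k assms(2) by (force simp: subset_iff)
  have "(\<Sum>j\<in>F. (1/2::real)^j) \<le> (\<Sum>j\<in>{a..<max a k}. (1/2::real)^j)"
    by (rule sum_mono2) (use F in auto)
  also have "\<dots> = 2*(1/2)^a - 2*(1/2)^(max a k)" by (rule geom) simp
  also have "\<dots> \<le> 2*(1/2)^a" by simp
  finally show ?thesis .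
qed

definition R where "R N = sum_list (map (\<lambda>e. x (\<sigma> e)) (q N))"

lemma R_bound: "0 \<le> R N \<and> R N \<le> 2 * (1/2)^(b N)"
proof -
  have dist: "distinct (q N)" using inv1[of N] strict_sorted_iff by blast
  have R: "R N = (\<Sum>e\<in>set (q N). x (\<sigma> e))"
    unfolding R_def using dist by (simp add: sum_list_distinct_conv_sum_set)
  define g where "g e = b (\<sigma> e)" for e
  have inj: "inj_on g (set (q N))"
  proof (rule inj_onI)
    fix e e' assume e: "e \<in> set (q N)" "e' \<in> set (q N)" "g e = g e'"
    have V: "isV (\<sigma> e)" "isV (\<sigma> e')" using \<sigma>_q e by auto
    have "\<sigma> e = \<sigma> e'"
      using b_strict[of "\<sigma> e" "\<sigma> e'"] b_strict[of "\<sigma> e'" "\<sigma> e"] V e(3)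
      unfolding g_def by (metis less_irrefl linorder_neqE_nat)
    then show "e = e'" by (metis \<sigma>\<sigma>)
  qed
  have "(\<Sum>e\<in>set (q N). x (\<sigma> e)) \<le> (\<Sum>e\<in>set (q N). (1/2::real)^(g e))"
    by (rule sum_mono) (use \<sigma>_q in \<open>auto simp: g_def isV_def\<close>)
  also have "\<dots> = (\<Sum>j\<in>g ` set (q N). (1/2::real)^j)"
    by (simp add: sum.reindex[OF inj] o_def)
  also have "\<dots> \<le> 2 * (1/2)^(b N)"
    by (rule geom2) (use \<sigma>_q b_mono in \<open>auto simp: g_def\<close>)
  finally have up: "R N \<le> 2 * (1/2)^(b N)" using R by simp
  have "0 \<le> R N" unfolding R by (rule sum_nonneg) (use pos less_imp_le in blast)
  with up show ?thesis by simp
qed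

lemma b_inf: "\<exists>N. \<forall>n\<ge>N. K \<le> b n"
proof (induction K)
  case 0 then show ?case by simp
next
  case (Suc K)
  then obtain N where N: "\<forall>n\<ge>N. K \<le> b n" by blast
  obtain m where m: "m \<ge> N" "isV m" using exV by blast
  have "\<forall>n\<ge>Suc m. Suc K \<le> b n"
    using b_mono[of "Suc m"] N m by (fastforce simp: b_Suc)
  then show ?case by blast
qed

lemma R_lim: "R \<longlonglongrightarrow> 0"
proof (rule tendsto_sandwich[where f="\<lambda>_. 0" and h="\<lambda>N. 2 * (1/2)^(b N)"])
  show "\<forall>\<^sub>F n in sequentially. 0 \<le> R n" using R_bound by simp
  show "\<forall>\<^sub>F n in sequentially. R n \<le> 2 * (1/2)^(b n)" using R_bound by simp
  show "(\<lambda>_. 0::real) \<longlonglongrightarrow> 0" by simp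
  show "(\<lambda>N. 2 * (1/2::real)^(b N)) \<longlonglongrightarrow> 0"
    unfolding lim_sequentially dist_real_def
  proof (intro allI impI)
    fix r :: real assume r: "r > 0"
    obtain K where K: "(1/2::real)^K < r/2" using real_arch_pow_inv[of "r/2" "1/2"] r by auto
    obtain N where N: "\<forall>n\<ge>N. K \<le> b n" using b_inf by blast
    have "\<bar>2 * (1/2::real)^(b n) - 0\<bar> < r" if "n \<ge> N" for n
    proof -
      have "(1/2::real)^(b n) \<le> (1/2)^K" using N that by (intro power_decreasing) auto
      moreover have "\<bar>2 * (1/2::real)^(b n) - 0\<bar> = 2 * (1/2)^(b n)" by simp
      ultimately show ?thesis using K by linarith
    qed
    then show "\<exists>no. \<forall>n\<ge>no. \<bar>2 * (1/2::real)^(b n) - 0\<bar> < r" by blast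
  qed
qed

lemma s_lim: "s \<longlonglongrightarrow> c"
  unfolding lim_sequentially dist_real_def
proof (intro allI impI)
  fix r :: real assume r: "r > 0"
  define \<epsilon> where "\<epsilon> = r/2"
  have \<epsilon>: "\<epsilon> > 0" using r by (simp add: \<epsilon>_def)
  have "eventually (\<lambda>n. x n < \<epsilon>) sequentially"
    using order_tendstoD(2)[OF lim \<epsilon>] .
  then obtain K where K: "\<And>n. n \<ge> K \<Longrightarrow> x n < \<epsilon>"
    unfolding eventually_sequentially by blast
  obtain N0 where N0: "\<forall>n\<ge>N0. K \<le> b n" using b_inf by blast
  define N1 where "N1 = max N0 K"
  have qs: "x e < \<epsilon>" if "n \<ge> N1" "e \<in> set (q n)" for n e
    using K N0 inv3[of n] that unfolding N1_def by (meson le_trans max.boundedE)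
  have xs: "x n < \<epsilon>" if "n \<ge> N1" for n using K that unfolding N1_def by simp
  have upper: "s n < c + \<epsilon>" if "n \<ge> N1" for n
    using inv5[of n] qs[OF that, of "last (q n)"] \<epsilon> by auto
  obtain m where m: "m \<ge> N1" "isV m" using exV by blast
  have lower: "s n \<ge> c - \<epsilon>" if "m \<le> n" for n using that
  proof (induction n rule: dec_induct)
    case base then show ?case using UV[OF m(2)] \<epsilon> by simp
  next
    case (step n)
    have nN: "n \<ge> N1" using step m by simp
    show ?case
    proof (cases "s n < c")
      case True
      then show ?thesis using step pos[of n] by (simp add: q_Suc s_def)
    next
      case F: False
      show ?thesis
      proof (cases "isV n")
        case True
        then obtain h r where qN: "q n = h # r" by (cases "q n") (auto simp: isV_def)
        have "x h < \<epsilon>" using qs[OF nN, of h] qN by simp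
        then show ?thesis using qN F True by (simp add: q_Suc s_def)
      next
        case False
        then show ?thesis using step F by (simp add: q_Suc s_def)
      qed
    qed
  qed
  have "\<bar>s n - c\<bar> < r" if "n \<ge> max m N1" for n
    using upper[of n] lower[of n] that unfolding \<epsilon>_def by auto
  then show "\<exists>no. \<forall>n\<ge>no. \<bar>s n - c\<bar> < r" by blast
qed

lemma result: "bij \<sigma> \<and> (\<lambda>n. x n - x (\<sigma> n)) sums c"
proof -
  have eq: "(\<Sum>i<N. x i - x (\<sigma> i)) = s N - R N" for N
    unfolding S_eq s_def R_def by (simp add: sum_list_subtractf)
  have "(\<lambda>N. s N - R N) \<longlonglongrightarrow> c - 0" by (intro tendsto_diff s_lim R_lim)
  then show ?thesis using bij_\<sigma> unfolding sums_def eq by simp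
qed

end

theorem mainTheorem3:
  fixes x :: "nat \<Rightarrow> real" and c :: real
  assumes pos: "\<And>n. x n > 0"
    and div: "\<not> summable x"
    and lim: "x \<longlonglongrightarrow> 0"
    and c: "c \<ge> 0"
  shows "\<exists>\<sigma>. bij \<sigma> \<and> (\<lambda>n. x n - x (\<sigma> n)) sums c"
proof (cases "c = 0")
  case True
  have "bij (id :: nat \<Rightarrow> nat)" by simp
  moreover have "(\<lambda>n. x n - x (id n)) sums c" using True by simp
  ultimately show ?thesis by blast
next
  case False
  then have "c > 0" using c by simp
  then interpret cons x c using pos div lim by unfold_locales auto
  show ?thesis using result by blast
qed

end
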